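(* Let $m_x,m_v,\ell\ge1$ and $1\le k\le\ell$ be integers, $\mathcal V=\{0,\dots,m_v-1\}$, and assume $\mathcal V^\ell$ is endowed with a multiplication $\odot$ making it a field whose addition is coordinatewise addition modulo $m_v$ (e.g. $m_v$ prime and $\mathcal V^\ell\cong\mathrm{GF}(m_v^\ell)$). For $u\in\mathcal V^\ell\setminus\{0^\ell\}$ let $f_u:\mathcal V^\ell\to\mathcal V^k$ map $v$ to the first $k$ coordinates of $u\odot v$. For $z,z'\in\mathcal V^k$ define $\varphi(v)=((z'-z)\,|\,0^{\ell-k})\odot u^{-1}+v$. Then: (a) $\varphi$ is a bijection of $\mathcal V^\ell$ and $\varphi(f_u^{-1}(z))=f_u^{-1}(z')$. (b) Let $m=m_xm_v$, $n=\ell m$, let $|0\rangle,|\phi\rangle\in\mathcal H_Q$ be unit vectors and $\mathcal E_{Q\to Q}$ a quantum channel. For $1\le j\le m$ let $|\mathrm{PPM},j\rangle=|0\rangle^{\otimes(j-1)}\otimes|\phi\rangle\otimes|0\rangle^{\otimes(m-j)}$; for $x\in\{1,\dots,m_x\}$, $v\in\mathcal V$ let $d(x,v)=(x-1)m_v+v+1$; let $\tilde\rho^v=\frac1{m_x}\sum_{x=1}^{m_x}|\mathrm{PPM},d(x,v)\rangle\langle\mathrm{PPM},d(x,v)|$ and $\rho^{v^\ell}_{Q^n}=\mathcal E^{\otimes n}(\tilde\rho^{v_1}\otimes\cdots\otimes\tilde\rho^{v_\ell})$. Let $U_{\mathrm{CS}}$ be the unitary on $\mathcal H_Q^{\otimes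 m}$ with $U_{\mathrm{CS}}(|\psi_1\rangle\otimes\cdots\otimes|\psi_m\rangle)=|\psi_m\rangle\otimes|\psi_1\rangle\otimes\cdots\otimes|\psi_{m-1}\rangle$. Then for all $v^\ell,v'^\ell\in\mathcal V^\ell$, $$\rho_{Q^n}^{v^\ell+v'^\ell}=\big(U_{\mathrm{CS}}^{v'_1}\otimes\cdots\otimes U_{\mathrm{CS}}^{v'_\ell}\big)\rho_{Q^n}^{v^\ell}\big(U_{\mathrm{CS}}^{v'_1}\otimes\cdots\otimes U_{\mathrm{CS}}^{v'_\ell}\big)^\dagger,$$ with $v^\ell+v'^\ell$ computed coordinatewise modulo $m_v$.
   Context: $a\,|\,b$ denotes concatenation of sequences and $0^j$ the all-zero sequence of length $j$; $z'-z$ is coordinatewise subtraction modulo $m_v$. $f_u^{-1}(z)=\{v\in\mathcal V^\ell: f_u(v)=z\}$. $\mathcal H_Q$ is finite-dimensional. *)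

theory Defs
  imports Complex_Main "HOL-Algebra.Ring"
begin

definition lists_below :: "nat \<Rightarrow> nat \<Rightarrow> nat list set" where
  "lists_below b n = {xs. length xs = n \<and> (\<forall>x\<in>set xs. x < b)}"

definition vadd :: "nat \<Rightarrow> nat list \<Rightarrow> nat list \<Rightarrow> nat list" where
  "vadd mv a b = map2 (\<lambda>x y. (x + y) mod mv) a b"

definition vsub :: "nat \<Rightarrow> nat list \<Rightarrow> nat list \<Rightarrow> nat list" where
  "vsub mv a b = map2 (\<lambda>x y. (x + mv - y) mod mv) a b"

text \<open>Vectors of H_Q: functions nat => complex supported on {..<d}.
  Vectors of H_Q^{\<otimes>n}: functions on index lists of length n with entries < d.
  Operators on H_Q^{\<otimes>n}: kernels nat list => nat list => complex (zero off valid indices).\<close>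

definition unit_vec :: "nat \<Rightarrow> (nat \<Rightarrow> complex) \<Rightarrow> bool" where
  "unit_vec d \<psi> \<longleftrightarrow> (\<forall>i\<ge>d. \<psi> i = 0) \<and> (\<Sum>i<d. (cmod (\<psi> i))\<^sup>2) = 1"

definition tensor_vec :: "nat \<Rightarrow> (nat \<Rightarrow> complex) list \<Rightarrow> nat list \<Rightarrow> complex" where
  "tensor_vec d \<psi>s I =
     (if I \<in> lists_below d (length \<psi>s) then (\<Prod>t<length \<psi>s. (\<psi>s ! t) (I ! t)) else 0)"

definition outer :: "(nat list \<Rightarrow> complex) \<Rightarrow> (nat list \<Rightarrow> complex) \<Rightarrow> nat list \<Rightarrow> nat list \<Rightarrow> complex" where
  "outer a b = (\<lambda>I J. a I * cnj (b J))"

text \<open>tensor product A_1 \<otimes> ... \<otimes> A_r of operators each acting on m copies of H_Q\<close>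
definition op_tensor :: "nat \<Rightarrow> nat \<Rightarrow> (nat list \<Rightarrow> nat list \<Rightarrow> complex) list
                          \<Rightarrow> nat list \<Rightarrow> nat list \<Rightarrow> complex" where
  "op_tensor d m As = (\<lambda>I J.
     if I \<in> lists_below d (length As * m) \<and> J \<in> lists_below d (length As * m)
     then (\<Prod>t<length As. (As ! t) (take m (drop (t * m) I)) (take m (drop (t * m) J)))
     else 0)"

definition op_mult :: "nat \<Rightarrow> nat \<Rightarrow> (nat list \<Rightarrow> nat list \<Rightarrow> complex)
                        \<Rightarrow> (nat list \<Rightarrow> nat list \<Rightarrow> complex) \<Rightarrow> nat list \<Rightarrow> nat list \<Rightarrow> complex" where
  "op_mult d n A B = (\<lambda>I J. \<Sum>K\<in>lists_below d n. A I K * B K J)"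

definition op_id :: "nat \<Rightarrow> nat \<Rightarrow> nat list \<Rightarrow> nat list \<Rightarrow> complex" where
  "op_id d n = (\<lambda>I J. if I \<in> lists_below d n \<and> I = J then 1 else 0)"

primrec op_pow :: "nat \<Rightarrow> nat \<Rightarrow> (nat list \<Rightarrow> nat list \<Rightarrow> complex) \<Rightarrow> nat
                    \<Rightarrow> nat list \<Rightarrow> nat list \<Rightarrow> complex" where
  "op_pow d n A 0 = op_id d n"
| "op_pow d n A (Suc k) = op_mult d n A (op_pow d n A k)"

definition adjoint :: "(nat list \<Rightarrow> nat list \<Rightarrow> complex) \<Rightarrow> nat list \<Rightarrow> nat list \<Rightarrow> complex" where
  "adjoint A = (\<lambda>I J. cnj (A J I))"

text \<open>U_CS on H_Q^{\<otimes>m}: (U \<psi>)(i_1,...,i_m) = \<psi>(i_2,...,i_m,i_1), i.e.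
  U(\<psi>_1 \<otimes> ... \<otimes> \<psi>_m) = \<psi>_m \<otimes> \<psi>_1 \<otimes> ... \<otimes> \<psi>_{m-1}.\<close>
definition cyclic_shift :: "nat \<Rightarrow> nat \<Rightarrow> nat list \<Rightarrow> nat list \<Rightarrow> complex" where
  "cyclic_shift d m = (\<lambda>I J. if I \<in> lists_below d m \<and> J = rotate1 I then 1 else 0)"

definition mat_unit :: "nat \<Rightarrow> nat \<Rightarrow> nat \<Rightarrow> nat \<Rightarrow> complex" where
  "mat_unit a b = (\<lambda>i j. if i = a \<and> j = b then 1 else 0)"

definition supported_op :: "nat \<Rightarrow> (nat \<Rightarrow> nat \<Rightarrow> complex) \<Rightarrow> bool" where
  "supported_op d X \<longleftrightarrow> (\<forall>i j. (d \<le> i \<or> d \<le> j) \<longrightarrow> X i j = 0)"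

definition psd :: "'a set \<Rightarrow> ('a \<Rightarrow> 'a \<Rightarrow> complex) \<Rightarrow> bool" where
  "psd S X \<longleftrightarrow> (\<forall>x. Im (\<Sum>p\<in>S. \<Sum>q\<in>S. cnj (x p) * X p q * x q) = 0
                  \<and> 0 \<le> Re (\<Sum>p\<in>S. \<Sum>q\<in>S. cnj (x p) * X p q * x q))"

text \<open>A quantum channel: linear, trace-preserving, completely positive map on operators of C^d.
  Complete positivity: id_r \<otimes> E is positive for every r.\<close>
definition quantum_channel :: "nat \<Rightarrow> ((nat \<Rightarrow> nat \<Rightarrow> complex) \<Rightarrow> (nat \<Rightarrow> nat \<Rightarrow> complex)) \<Rightarrow> bool" where
  "quantum_channel d E \<longleftrightarrow>
     (\<forall>X. supported_op d X \<longrightarrow> supported_op d (E X)) \<and>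
     (\<forall>a b X Y. supported_op d X \<and> supported_op d Y \<longrightarrow>
         E (\<lambda>i j. a * X i j + b * Y i j) = (\<lambda>i j. a * E X i j + b * E Y i j)) \<and>
     (\<forall>X. supported_op d X \<longrightarrow> (\<Sum>i<d. E X i i) = (\<Sum>i<d. X i i)) \<and>
     (\<forall>(r::nat) (X :: nat \<times> nat \<Rightarrow> nat \<times> nat \<Rightarrow> complex).
         (\<forall>p q. p \<notin> {..<r} \<times> {..<d} \<or> q \<notin> {..<r} \<times> {..<d} \<longrightarrow> X p q = 0) \<and>
         psd ({..<r} \<times> {..<d}) X \<longrightarrow>
         psd ({..<r} \<times> {..<d}) (\<lambda>(a, i) (b, j). E (\<lambda>i' j'. X (a, i') (b, j')) i j))"

text \<open>E^{\<otimes>n}, the linear extension acting on operators on H_Q^{\<otimes>n}\<close>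
definition chan_pow :: "nat \<Rightarrow> nat \<Rightarrow> ((nat \<Rightarrow> nat \<Rightarrow> complex) \<Rightarrow> (nat \<Rightarrow> nat \<Rightarrow> complex))
                        \<Rightarrow> (nat list \<Rightarrow> nat list \<Rightarrow> complex) \<Rightarrow> nat list \<Rightarrow> nat list \<Rightarrow> complex" where
  "chan_pow d n E X = (\<lambda>I J.
     if I \<in> lists_below d n \<and> J \<in> lists_below d n
     then (\<Sum>K\<in>lists_below d n. \<Sum>L\<in>lists_below d n.
             X K L * (\<Prod>t<n. E (mat_unit (K ! t) (L ! t)) (I ! t) (J ! t)))
     else 0)"

definition ppm :: "nat \<Rightarrow> (nat \<Rightarrow> complex) \<Rightarrow> (nat \<Rightarrow> complex) \<Rightarrow> nat \<Rightarrow> nat \<Rightarrow> nat list \<Rightarrow> complex" where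
  "ppm d zero\<^sub>Q \<phi> m j = tensor_vec d (map (\<lambda>t. if t = j - 1 then \<phi> else zero\<^sub>Q) [0..<m])"

definition dpos :: "nat \<Rightarrow> nat \<Rightarrow> nat \<Rightarrow> nat" where
  "dpos mv x v = (x - 1) * mv + v + 1"

definition rho_tilde :: "nat \<Rightarrow> (nat \<Rightarrow> complex) \<Rightarrow> (nat \<Rightarrow> complex) \<Rightarrow> nat \<Rightarrow> nat \<Rightarrow> nat
                          \<Rightarrow> nat list \<Rightarrow> nat list \<Rightarrow> complex" where
  "rho_tilde d zero\<^sub>Q \<phi> mx mv v = (\<lambda>I J. (1 / of_nat mx) *
     (\<Sum>x\<in>{1..mx}. outer (ppm d zero\<^sub>Q \<phi> (mx * mv) (dpos mv x v))
                         (ppm d zero\<^sub>Q \<phi> (mx * mv) (dpos mv x v)) I J))"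

definition rho_out :: "nat \<Rightarrow> ((nat \<Rightarrow> nat \<Rightarrow> complex) \<Rightarrow> (nat \<Rightarrow> nat \<Rightarrow> complex))
      \<Rightarrow> (nat \<Rightarrow> complex) \<Rightarrow> (nat \<Rightarrow> complex) \<Rightarrow> nat \<Rightarrow> nat \<Rightarrow> nat list
      \<Rightarrow> nat list \<Rightarrow> nat list \<Rightarrow> complex" where
  "rho_out d E zero\<^sub>Q \<phi> mx mv vs =
     chan_pow d (length vs * (mx * mv)) E
       (op_tensor d (mx * mv) (map (rho_tilde d zero\<^sub>Q \<phi> mx mv) vs))"

end

theory Submission imports Defs "HOL-Number_Theory.Cong" begin

lemma mod_add_cancel_nat':
  fixes a b c m :: nat
  assumes "a < m" "b < m" "(c + a) mod m = (c + b) mod m"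
  shows "a = b"
proof -
  have "[c + a = c + b] (mod m)" using assms by (simp add: cong_def)
  hence "[a = b] (mod m)" by (simp add: cong_add_lcancel_nat)
  thus ?thesis using assms by (simp add: cong_def)
qed

lemma finite_lb: "finite (lists_below d n)"
proof -
  have "lists_below d n = {xs. set xs \<subseteq> {..<d} \<and> length xs = n}"
    by (auto simp: lists_below_def)
  thus ?thesis using finite_lists_length_eq[of "{..<d}" n] by simp
qed

lemma op_pow_cs:
  "op_pow d m (cyclic_shift d m) s = (\<lambda>I J. if I \<in> lists_below d m \<and> J = rotate s I then 1 else 0)"
proof (induction s)
  case 0 show ?case by (auto simp: op_id_def fun_eq_iff)
next
  case (Suc s)
  have rot: "I \<in> lists_below d m \<Longrightarrow> rotate1 I \<in> lists_below d m" for I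
    by (simp add: lists_below_def)
  show ?case
  proof (intro ext)
    fix I J
    have "op_pow d m (cyclic_shift d m) (Suc s) I J
       = (\<Sum>K\<in>lists_below d m. if K = rotate1 I then
             (if I \<in> lists_below d m \<and> J = rotate s K then 1 else 0) else 0)"
      unfolding op_pow.simps op_mult_def Suc.IH
      by (intro sum.cong refl) (auto simp: rot cyclic_shift_def)
    also have "\<dots> = (if I \<in> lists_below d m \<and> J = rotate (Suc s) I then 1 else 0)"
      by (auto simp: finite_lb rot rotate1_rotate_swap)
    finally show "op_pow d m (cyclic_shift d m) (Suc s) I J = (if I \<in> lists_below d m \<and> J = rotate (Suc s) I then 1 else 0)" .
  qed
qed

definition perm_list :: "(nat \<Rightarrow> nat) \<Rightarrow> nat \<Rightarrow> 'a list \<Rightarrow> 'a list" where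
  "perm_list \<pi> n I = map (\<lambda>p. I ! \<pi> p) [0..<n]"

lemma perm_list_nth: "p < n \<Longrightarrow> perm_list \<pi> n I ! p = I ! \<pi> p"
  by (simp add: perm_list_def)

lemma perm_list_in:
  assumes "bij_betw \<pi> {..<n} {..<n}" "I \<in> lists_below d n"
  shows "perm_list \<pi> n I \<in> lists_below d n"
proof -
  have "\<pi> p < n" if "p < n" for p using assms(1) that by (auto dest: bij_betw_apply)
  thus ?thesis using assms(2) by (auto simp: lists_below_def perm_list_def)
qed

lemma perm_list_bij:
  assumes "bij_betw \<pi> {..<n} {..<n}"
  shows "bij_betw (perm_list \<pi> n) (lists_below d n) (lists_below d n)"
proof -
  let ?\<rho> = "inv_into {..<n} \<pi>"
  have r: "bij_betw ?\<rho> {..<n} {..<n}" using assms by (rule bij_betw_inv_into)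
  have c: "perm_list \<beta> n (perm_list \<alpha> n I) = I"
    if "length I = n" "\<And>q. q < n \<Longrightarrow> \<beta> q < n" "\<And>q. q < n \<Longrightarrow> \<alpha> (\<beta> q) = q" for \<alpha> \<beta> and I :: "nat list"
    using that by (intro nth_equalityI) (auto simp: perm_list_def)
  show ?thesis
  proof (rule bij_betw_byWitness[where f'="perm_list ?\<rho> n"])
    show "\<forall>a\<in>lists_below d n. perm_list ?\<rho> n (perm_list \<pi> n a) = a"
    proof
      fix a assume "a \<in> lists_below d n"
      hence "length a = n" by (simp add: lists_below_def)
      thus "perm_list ?\<rho> n (perm_list \<pi> n a) = a"
        by (rule c) (use assms r in \<open>auto simp: bij_betw_inv_into_right dest: bij_betw_apply\<close>)
    qed
    show "\<forall>a\<in>lists_below d n. perm_list \<pi> n (perm_list ?\<rho> n a) = a"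
    proof
      fix a assume "a \<in> lists_below d n"
      hence "length a = n" by (simp add: lists_below_def)
      thus "perm_list \<pi> n (perm_list ?\<rho> n a) = a"
        by (rule c) (use assms r in \<open>auto simp: bij_betw_inv_into_left dest: bij_betw_apply\<close>)
    qed
    show "perm_list \<pi> n ` lists_below d n \<subseteq> lists_below d n"
      using perm_list_in[OF assms] by auto
    show "perm_list ?\<rho> n ` lists_below d n \<subseteq> lists_below d n"
      using perm_list_in[OF r] by auto
  qed
qed

lemma chan_pow_perm:
  assumes b: "bij_betw \<pi> {..<n} {..<n}" and I: "I \<in> lists_below d n" and J: "J \<in> lists_below d n"
  shows "chan_pow d n E X (perm_list \<pi> n I) (perm_list \<pi> n J)
       = chan_pow d n E (\<lambda>K L. X (perm_list \<pi> n K) (perm_list \<pi> n L)) I J"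
proof -
  let ?s = "perm_list \<pi> n"
  let ?L = "lists_below d n"
  let ?F = "\<lambda>K L t. E (mat_unit (K ! t) (L ! t)) (I ! t) (J ! t)"
  have sb: "bij_betw ?s ?L ?L" using b by (rule perm_list_bij)
  have "chan_pow d n E X (?s I) (?s J) = (\<Sum>K\<in>?L. \<Sum>L\<in>?L.
             X K L * (\<Prod>t<n. E (mat_unit (K ! t) (L ! t)) (?s I ! t) (?s J ! t)))"
    using perm_list_in[OF b I] perm_list_in[OF b J] by (simp add: chan_pow_def)
  also have "\<dots> = (\<Sum>K\<in>?L. \<Sum>L\<in>?L.
             X (?s K) (?s L) * (\<Prod>t<n. E (mat_unit (?s K ! t) (?s L ! t)) (?s I ! t) (?s J ! t)))"
  proof -
    have "(\<Sum>L\<in>?L. X K L * (\<Prod>t<n. E (mat_unit (K ! t) (L ! t)) (?s I ! t) (?s J ! t)))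
        = (\<Sum>L\<in>?L. X K (?s L) * (\<Prod>t<n. E (mat_unit (K ! t) (?s L ! t)) (?s I ! t) (?s J ! t)))" for K
      by (rule sum.reindex_bij_betw[OF sb, symmetric])
    hence "(\<Sum>K\<in>?L. \<Sum>L\<in>?L. X K L * (\<Prod>t<n. E (mat_unit (K ! t) (L ! t)) (?s I ! t) (?s J ! t)))
        = (\<Sum>K\<in>?L. \<Sum>L\<in>?L. X K (?s L) * (\<Prod>t<n. E (mat_unit (K ! t) (?s L ! t)) (?s I ! t) (?s J ! t)))"
      by simp
    also have "\<dots> = (\<Sum>K\<in>?L. \<Sum>L\<in>?L. X (?s K) (?s L) * (\<Prod>t<n. E (mat_unit (?s K ! t) (?s L ! t)) (?s I ! t) (?s J ! t)))"
      by (rule sum.reindex_bij_betw[OF sb, symmetric])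
    finally show ?thesis .
  qed
  also have "\<dots> = (\<Sum>K\<in>?L. \<Sum>L\<in>?L. X (?s K) (?s L) * (\<Prod>t<n. ?F K L (\<pi> t)))"
    by (intro sum.cong refl arg_cong2[where f="(*)"] prod.cong) (simp_all add: perm_list_nth)
  also have "\<dots> = (\<Sum>K\<in>?L. \<Sum>L\<in>?L. X (?s K) (?s L) * (\<Prod>t<n. ?F K L t))"
    by (intro sum.cong refl arg_cong2[where f="(*)"] prod.reindex_bij_betw[OF b])
  also have "\<dots> = chan_pow d n E (\<lambda>K L. X (?s K) (?s L)) I J"
    using I J by (simp add: chan_pow_def)
  finally show ?thesis .
qed

definition shp :: "nat \<Rightarrow> nat list \<Rightarrow> nat \<Rightarrow> nat" where
  "shp m s p = (p div m) * m + ((p mod m + s ! (p div m)) mod m)"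

lemma lt_mult_aux: "(t::nat) < l \<Longrightarrow> i < m \<Longrightarrow> t * m + i < l * m"
proof -
  assume a: "t < l" "i < m"
  have "t * m + i < t * m + m" using a by simp
  also have "\<dots> = Suc t * m" by simp
  also have "\<dots> \<le> l * m" using a by (intro mult_le_mono1) simp
  finally show ?thesis .
qed

lemma shp_div: "0 < m \<Longrightarrow> shp m s p div m = p div m"
  by (simp add: shp_def)
lemma shp_mod: "0 < m \<Longrightarrow> shp m s p mod m = (p mod m + s ! (p div m)) mod m"
  by (simp add: shp_def)

lemma shp_bij:
  assumes m: "0 < m"
  shows "bij_betw (shp m s) {..<length s * m} {..<length s * m}"
proof -
  let ?A = "{..<length s * m}"
  have into: "shp m s ` ?A \<subseteq> ?A"
  proof
    fix y assume "y \<in> shp m s ` ?A"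
    then obtain p where p: "p < length s * m" "y = shp m s p" by auto
    have "p div m < length s" using p m by (simp add: div_less_iff_less_mult)
    thus "y \<in> ?A" using p m by (simp add: shp_def lt_mult_aux)
  qed
  have inj: "inj_on (shp m s) ?A"
  proof (rule inj_onI)
    fix p q assume "p \<in> ?A" "q \<in> ?A" and e: "shp m s p = shp m s q"
    have dv: "p div m = q div m" using shp_div[OF m, of s p] shp_div[OF m, of s q] e by simp
    have "(s ! (p div m) + p mod m) mod m = (s ! (p div m) + q mod m) mod m"
      using shp_mod[OF m, of s p] shp_mod[OF m, of s q] e dv by (simp add: add.commute)
    hence "p mod m = q mod m" by (rule mod_add_cancel_nat'[rotated 2]) (simp_all add: m)
    thus "p = q" using dv by (metis div_mult_mod_eq)
  qed
  have "shp m s ` ?A = ?A" using endo_inj_surj[OF _ into inj] by simp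
  thus ?thesis using inj by (simp add: bij_betw_def)
qed

lemma block_shp:
  assumes m: "0 < m" and len: "length I = length s * m" and t: "t < length s"
  shows "take m (drop (t * m) (perm_list (shp m s) (length s * m) I)) = rotate (s ! t) (take m (drop (t * m) I))"
proof (rule nth_equalityI)
  have tm: "t * m + m \<le> length s * m" using lt_mult_aux[OF t, of "m - 1" m] m by simp
  show "length (take m (drop (t * m) (perm_list (shp m s) (length s * m) I))) = length (rotate (s ! t) (take m (drop (t * m) I)))"
    using tm len by (simp add: perm_list_def)
  fix i assume "i < length (take m (drop (t * m) (perm_list (shp m s) (length s * m) I)))"
  hence i: "i < m" using tm by (simp add: perm_list_def)
  have lt: "t * m + i < length s * m" using lt_mult_aux[OF t i] .
  have d: "(t * m + i) div m = t" "(t * m + i) mod m = i" "(i + t * m) div m = t" "i mod m = i" using i m by auto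
  have "take m (drop (t * m) (perm_list (shp m s) (length s * m) I)) ! i = I ! shp m s (t * m + i)"
  proof -
    have "t * m \<le> length s * m" using tm by linarith
    thus ?thesis using i lt by (simp add: perm_list_def add.commute)
  qed
  also have "\<dots> = I ! (t * m + (s ! t + i) mod m)" by (simp add: shp_def d add.commute)
  also have "\<dots> = rotate (s ! t) (take m (drop (t * m) I)) ! i"
  proof -
    have "t * m \<le> length I" using tm len by linarith
    thus ?thesis using i tm len m by (simp add: nth_rotate add.commute)
  qed
  finally show "take m (drop (t * m) (perm_list (shp m s) (length s * m) I)) ! i = rotate (s ! t) (take m (drop (t * m) I)) ! i" .
qed

lemma blocks_eq:
  assumes m: "0 < m" and "length A = l * m" "length B = l * m"
    and "\<And>t. t < l \<Longrightarrow> take m (drop (t * m) A) = take m (drop (t * m) B)"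
  shows "A = B"
proof (rule nth_equalityI)
  show "length A = length B" using assms by simp
  fix p assume "p < length A"
  hence p: "p < l * m" using assms by simp
  let ?t = "p div m" and ?i = "p mod m"
  have t: "?t < l" using p m by (simp add: div_less_iff_less_mult)
  have i: "?i < m" using m by simp
  have pe: "p = ?t * m + ?i" by simp
  have tm: "?t * m + m \<le> l * m" using lt_mult_aux[OF t, of "m - 1" m] m by simp
  have e: "take m (drop (?t * m) X) ! ?i = X ! p" if "length X = l * m" for X :: "'a list"
  proof -
    have "?t * m \<le> length X" using tm that by linarith
    thus ?thesis using i by simp
  qed
  have "A ! p = take m (drop (?t * m) A) ! ?i" using e assms(2) by simp
  also have "\<dots> = take m (drop (?t * m) B) ! ?i" using assms(4)[OF t] by simp
  also have "\<dots> = B ! p" using e assms(3) by simp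
  finally show "A ! p = B ! p" .
qed

lemma block_in:
  assumes "I \<in> lists_below d (l * m)" "t < l"
  shows "take m (drop (t * m) I) \<in> lists_below d m"
proof -
  have tm: "t * m + m \<le> l * m" using lt_mult_aux[OF assms(2), of "m - 1" m]
    by (cases m) auto
  thus ?thesis using assms(1) by (auto simp: lists_below_def dest: in_set_takeD in_set_dropD)
qed

lemma prod_indicator:
  assumes "finite A"
  shows "(\<Prod>t\<in>A. if P t then 1 else 0) = (if \<forall>t\<in>A. P t then (1::complex) else 0)"
proof (cases "\<forall>t\<in>A. P t")
  case True thus ?thesis by simp
next
  case False
  then obtain t where "t \<in> A" "\<not> P t" by auto
  thus ?thesis using assms by (subst prod_zero) auto
qed

lemma W_char:
  assumes m: "0 < m"
  shows "op_tensor d m (map (op_pow d m (cyclic_shift d m)) s)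
    = (\<lambda>I J. if I \<in> lists_below d (length s * m) \<and> J = perm_list (shp m s) (length s * m) I then 1 else 0)"
proof (intro ext)
  fix I J
  let ?n = "length s * m"
  let ?L = "lists_below d ?n"
  let ?\<sigma> = "perm_list (shp m s) ?n"
  show "op_tensor d m (map (op_pow d m (cyclic_shift d m)) s) I J = (if I \<in> ?L \<and> J = ?\<sigma> I then 1 else 0)"
  proof (cases "I \<in> ?L \<and> J \<in> ?L")
    case True
    hence IL: "I \<in> ?L" and JL: "J \<in> ?L" by auto
    have "op_tensor d m (map (op_pow d m (cyclic_shift d m)) s) I J
        = (\<Prod>t<length s. if take m (drop (t * m) J) = rotate (s ! t) (take m (drop (t * m) I)) then 1 else 0)"
      unfolding op_tensor_def using True
      by (auto intro!: prod.cong simp: op_pow_cs block_in)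
    also have "\<dots> = (if \<forall>t<length s. take m (drop (t * m) J) = rotate (s ! t) (take m (drop (t * m) I)) then 1 else 0)"
      by (subst prod_indicator) auto
    also have "(\<forall>t<length s. take m (drop (t * m) J) = rotate (s ! t) (take m (drop (t * m) I))) \<longleftrightarrow> J = ?\<sigma> I"
    proof
      assume a: "\<forall>t<length s. take m (drop (t * m) J) = rotate (s ! t) (take m (drop (t * m) I))"
      show "J = ?\<sigma> I"
      proof (rule blocks_eq[OF m])
        show "length J = length s * m" using JL by (simp add: lists_below_def)
        show "length (?\<sigma> I) = length s * m" by (simp add: perm_list_def)
        fix t assume "t < length s"
        thus "take m (drop (t * m) J) = take m (drop (t * m) (?\<sigma> I))"
          using a IL block_shp[OF m, of I s t] by (simp add: lists_below_def)
      qed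
    next
      assume "J = ?\<sigma> I"
      thus "\<forall>t<length s. take m (drop (t * m) J) = rotate (s ! t) (take m (drop (t * m) I))"
        using IL block_shp[OF m, of I s] by (simp add: lists_below_def)
    qed
    finally show ?thesis using IL by simp
  next
    case False
    have "I \<in> ?L \<Longrightarrow> ?\<sigma> I \<in> ?L" using perm_list_in[OF shp_bij[OF m]] by blast
    thus ?thesis using False by (auto simp: op_tensor_def)
  qed
qed

lemma conj_perm:
  assumes sL: "\<And>I. I \<in> lists_below d n \<Longrightarrow> \<sigma> I \<in> lists_below d n"
  shows "op_mult d n (op_mult d n (\<lambda>I J. if I \<in> lists_below d n \<and> J = \<sigma> I then 1 else 0) X)
      (adjoint (\<lambda>I J. if I \<in> lists_below d n \<and> J = \<sigma> I then 1 else 0)) I J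
    = (if I \<in> lists_below d n \<and> J \<in> lists_below d n then X (\<sigma> I) (\<sigma> J) else 0)"
proof -
  let ?L = "lists_below d n"
  have inner: "op_mult d n (\<lambda>I J. if I \<in> ?L \<and> J = \<sigma> I then 1 else 0) X I K
      = (if I \<in> ?L then X (\<sigma> I) K else 0)" for I K
  proof -
    have "op_mult d n (\<lambda>I J. if I \<in> ?L \<and> J = \<sigma> I then 1 else 0) X I K
       = (\<Sum>K'\<in>?L. if K' = \<sigma> I then (if I \<in> ?L then X K' K else 0) else 0)"
      unfolding op_mult_def by (intro sum.cong) auto
    also have "\<dots> = (if I \<in> ?L then X (\<sigma> I) K else 0)"
      using sL by (simp add: finite_lb)
    finally show ?thesis .
  qed
  have "op_mult d n (op_mult d n (\<lambda>I J. if I \<in> ?L \<and> J = \<sigma> I then 1 else 0) X)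
      (adjoint (\<lambda>I J. if I \<in> ?L \<and> J = \<sigma> I then 1 else 0)) I J
     = (\<Sum>K\<in>?L. if K = \<sigma> J then (if I \<in> ?L \<and> J \<in> ?L then X (\<sigma> I) K else 0) else 0)"
    unfolding op_mult_def[of d n "op_mult d n _ X"] inner adjoint_def by (intro sum.cong) auto
  also have "\<dots> = (if I \<in> ?L \<and> J \<in> ?L then X (\<sigma> I) (\<sigma> J) else 0)"
    using sL by (simp add: finite_lb)
  finally show ?thesis .
qed

lemma rot_bij:
  assumes m: "0 < m"
  shows "bij_betw (\<lambda>t. (s + t) mod m) {..<m::nat} {..<m}"
proof -
  have into: "(\<lambda>t. (s + t) mod m) ` {..<m} \<subseteq> {..<m}" using m by (auto intro: mod_less_divisor)
  have inj: "inj_on (\<lambda>t. (s + t) mod m) {..<m}"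
    by (rule inj_onI) (erule mod_add_cancel_nat'[rotated 2]; simp)
  have "(\<lambda>t. (s + t) mod m) ` {..<m} = {..<m}" using endo_inj_surj[OF _ into inj] by simp
  thus ?thesis using inj by (simp add: bij_betw_def)
qed

lemma ppm_rot:
  assumes m: "0 < m" and p: "p < m" and K: "K \<in> lists_below d m"
  shows "ppm d z \<phi> m (Suc p) (rotate s K) = ppm d z \<phi> m (Suc ((p + s) mod m)) K"
proof -
  have rK: "rotate s K \<in> lists_below d m" using K by (simp add: lists_below_def)
  have lK: "length K = m" using K by (simp add: lists_below_def)
  let ?G = "\<lambda>t'. (if t' = (p + s) mod m then \<phi> else z) (K ! t')"
  have "ppm d z \<phi> m (Suc p) (rotate s K) = (\<Prod>t<m. (if t = p then \<phi> else z) (rotate s K ! t))"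
    using rK by (simp add: ppm_def tensor_vec_def)
  also have "\<dots> = (\<Prod>t<m. ?G ((s + t) mod m))"
  proof (intro prod.cong refl)
    fix t assume t: "t \<in> {..<m}"
    have "t = p \<longleftrightarrow> (s + t) mod m = (p + s) mod m"
    proof
      assume "(s + t) mod m = (p + s) mod m"
      hence "(s + t) mod m = (s + p) mod m" by (simp add: add.commute)
      thus "t = p" by (rule mod_add_cancel_nat'[rotated 2]) (use t p in auto)
    qed (simp add: add.commute)
    thus "(if t = p then \<phi> else z) (rotate s K ! t) = ?G ((s + t) mod m)"
      using t lK by (simp add: nth_rotate)
  qed
  also have "\<dots> = (\<Prod>t<m. ?G t)" by (rule prod.reindex_bij_betw[OF rot_bij[OF m]])
  also have "\<dots> = ppm d z \<phi> m (Suc ((p + s) mod m)) K"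
    using K by (simp add: ppm_def tensor_vec_def)
  finally show ?thesis .
qed

definition Pset :: "nat \<Rightarrow> nat \<Rightarrow> nat \<Rightarrow> nat set" where
  "Pset mx mv w = {p. p < mx * mv \<and> p mod mv = w}"

lemma dpos_bij:
  assumes mv: "0 < mv" and w: "w < mv"
  shows "bij_betw (\<lambda>x. dpos mv x w - 1) {1..mx} (Pset mx mv w)"
proof (rule bij_betw_byWitness[where f'="\<lambda>p. p div mv + 1"])
  show "\<forall>a\<in>{1..mx}. (dpos mv a w - 1) div mv + 1 = a"
    using mv w by (auto simp: dpos_def)
  show "\<forall>a\<in>Pset mx mv w. dpos mv (a div mv + 1) w - 1 = a"
    by (auto simp: dpos_def Pset_def)
  show "(\<lambda>x. dpos mv x w - 1) ` {1..mx} \<subseteq> Pset mx mv w"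
  proof
    fix y assume "y \<in> (\<lambda>x. dpos mv x w - 1) ` {1..mx}"
    then obtain x where x: "x \<in> {1..mx}" "y = (x - 1) * mv + w" by (auto simp: dpos_def)
    have "(x - 1) * mv + w < mx * mv" using x w by (intro lt_mult_aux) auto
    thus "y \<in> Pset mx mv w" using x w by (simp add: Pset_def)
  qed
  show "(\<lambda>p. p div mv + 1) ` Pset mx mv w \<subseteq> {1..mx}"
    using mv by (auto simp: Pset_def div_less_iff_less_mult Suc_le_eq)
qed

lemma card_Pset: "0 < mv \<Longrightarrow> w < mv \<Longrightarrow> card (Pset mx mv w) = mx"
  using bij_betw_same_card[OF dpos_bij] by fastforce

lemma shift_bij:
  assumes mv: "0 < mv" and mx: "0 < mx" and w: "w < mv"
  shows "bij_betw (\<lambda>p. (p + s) mod (mx * mv)) (Pset mx mv w) (Pset mx mv ((w + s) mod mv))"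
proof -
  let ?m = "mx * mv"
  let ?f = "\<lambda>p. (p + s) mod ?m"
  have m: "0 < ?m" using mv mx by simp
  have into: "?f ` Pset mx mv w \<subseteq> Pset mx mv ((w + s) mod mv)"
  proof
    fix y assume "y \<in> ?f ` Pset mx mv w"
    then obtain p where p: "p < ?m" "p mod mv = w" "y = (p + s) mod ?m" by (auto simp: Pset_def)
    have "y mod mv = (p + s) mod mv" using p by (simp add: mod_mod_cancel)
    also have "\<dots> = (w + s) mod mv" using p by (metis mod_add_left_eq)
    finally show "y \<in> Pset mx mv ((w + s) mod mv)" using p m by (simp add: Pset_def)
  qed
  have inj: "inj_on ?f (Pset mx mv w)"
  proof (rule inj_onI)
    fix p q assume "p \<in> Pset mx mv w" "q \<in> Pset mx mv w" "?f p = ?f q"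
    hence "p < ?m" "q < ?m" "(s + p) mod ?m = (s + q) mod ?m" by (auto simp: Pset_def add.commute)
    thus "p = q" by (rule mod_add_cancel_nat')
  qed
  have fin: "finite (Pset mx mv ((w + s) mod mv))" by (simp add: Pset_def)
  have "card (?f ` Pset mx mv w) = card (Pset mx mv ((w + s) mod mv))"
    using card_image[OF inj] card_Pset[OF mv w] card_Pset[OF mv, of "(w + s) mod mv"] mv by simp
  hence "?f ` Pset mx mv w = Pset mx mv ((w + s) mod mv)"
    using card_subset_eq[OF fin into] by simp
  thus ?thesis using inj by (simp add: bij_betw_def)
qed

lemma rt_shift:
  assumes mv: "0 < mv" and mx: "0 < mx" and w: "w < mv"
    and K: "K \<in> lists_below d (mx * mv)" and L: "L \<in> lists_below d (mx * mv)"
  shows "rho_tilde d z \<phi> mx mv ((w + s) mod mv) K L = rho_tilde d z \<phi> mx mv w (rotate s K) (rotate s L)"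
proof -
  let ?m = "mx * mv"
  have m: "0 < ?m" using mv mx by simp
  have gen: "rho_tilde d z \<phi> mx mv u K' L' = (1 / of_nat mx) * (\<Sum>p\<in>Pset mx mv u. ppm d z \<phi> ?m (Suc p) K' * cnj (ppm d z \<phi> ?m (Suc p) L'))"
    if u: "u < mv" for u K' L'
  proof -
    have "rho_tilde d z \<phi> mx mv u K' L' = (1 / of_nat mx) * (\<Sum>x\<in>{1..mx}. (\<lambda>p. ppm d z \<phi> ?m (Suc p) K' * cnj (ppm d z \<phi> ?m (Suc p) L')) (dpos mv x u - 1))"
      unfolding rho_tilde_def outer_def
      by (rule arg_cong[where f="\<lambda>S. (1 / of_nat mx) * S"], rule sum.cong[OF refl]) (simp add: dpos_def)
    also have "\<dots> = (1 / of_nat mx) * (\<Sum>p\<in>Pset mx mv u. ppm d z \<phi> ?m (Suc p) K' * cnj (ppm d z \<phi> ?m (Suc p) L'))"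
      by (subst sum.reindex_bij_betw[OF dpos_bij[OF mv u]]) rule
    finally show ?thesis .
  qed
  have "rho_tilde d z \<phi> mx mv w (rotate s K) (rotate s L)
     = (1 / of_nat mx) * (\<Sum>p\<in>Pset mx mv w. (\<lambda>q. ppm d z \<phi> ?m (Suc q) K * cnj (ppm d z \<phi> ?m (Suc q) L)) ((p + s) mod ?m))"
    unfolding gen[OF w]
  proof (rule arg_cong[where f="\<lambda>S. (1 / of_nat mx) * S"], rule sum.cong[OF refl])
    fix p assume "p \<in> Pset mx mv w"
    hence p: "p < ?m" by (simp add: Pset_def)
    show "ppm d z \<phi> ?m (Suc p) (rotate s K) * cnj (ppm d z \<phi> ?m (Suc p) (rotate s L))
        = ppm d z \<phi> ?m (Suc ((p + s) mod ?m)) K * cnj (ppm d z \<phi> ?m (Suc ((p + s) mod ?m)) L)"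
      by (simp only: ppm_rot[OF m p K] ppm_rot[OF m p L])
  qed
  also have "\<dots> = (1 / of_nat mx) * (\<Sum>q\<in>Pset mx mv ((w + s) mod mv). ppm d z \<phi> ?m (Suc q) K * cnj (ppm d z \<phi> ?m (Suc q) L))"
    by (subst sum.reindex_bij_betw[OF shift_bij[OF mv mx w]]) rule
  also have "\<dots> = rho_tilde d z \<phi> mx mv ((w + s) mod mv) K L"
    using gen[of "(w + s) mod mv" K L] mv by simp
  finally show ?thesis by simp
qed

lemma vadd_len: "length a = l \<Longrightarrow> length b = l \<Longrightarrow> length (vadd mv a b) = l"
  by (simp add: vadd_def)

lemma vadd_nth: "t < length a \<Longrightarrow> t < length b \<Longrightarrow> vadd mv a b ! t = (a ! t + b ! t) mod mv"
  by (simp add: vadd_def)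

lemma tensor_shift:
  assumes mv: "0 < mv" and mx: "0 < mx"
    and v: "v \<in> lists_below mv l" and v': "v' \<in> lists_below mv l"
    and K: "K \<in> lists_below d (l * (mx * mv))" and L: "L \<in> lists_below d (l * (mx * mv))"
  shows "op_tensor d (mx * mv) (map (rho_tilde d z \<phi> mx mv) (vadd mv v v')) K L
       = op_tensor d (mx * mv) (map (rho_tilde d z \<phi> mx mv) v)
           (perm_list (shp (mx * mv) v') (l * (mx * mv)) K) (perm_list (shp (mx * mv) v') (l * (mx * mv)) L)"
proof -
  let ?m = "mx * mv"
  let ?\<sigma> = "perm_list (shp ?m v') (l * ?m)"
  have m: "0 < ?m" using mv mx by simp
  have lv: "length v = l" and lv': "length v' = l" using v v' by (auto simp: lists_below_def)
  have vlt: "t < l \<Longrightarrow> v ! t < mv" for t using v by (auto simp: lists_below_def)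
  have bij: "bij_betw (shp ?m v') {..<l * ?m} {..<l * ?m}" using shp_bij[OF m, of v'] lv' by simp
  have sK: "?\<sigma> K \<in> lists_below d (l * ?m)" and sL: "?\<sigma> L \<in> lists_below d (l * ?m)"
    using perm_list_in[OF bij] K L by auto
  have lK: "length K = length v' * ?m" and lL: "length L = length v' * ?m"
    using K L lv' by (auto simp: lists_below_def)
  have "op_tensor d ?m (map (rho_tilde d z \<phi> mx mv) (vadd mv v v')) K L
      = (\<Prod>t<l. rho_tilde d z \<phi> mx mv ((v ! t + v' ! t) mod mv) (take ?m (drop (t * ?m) K)) (take ?m (drop (t * ?m) L)))"
    using K L lv lv' by (simp add: op_tensor_def vadd_len vadd_nth)
  also have "\<dots> = (\<Prod>t<l. rho_tilde d z \<phi> mx mv (v ! t) (rotate (v' ! t) (take ?m (drop (t * ?m) K))) (rotate (v' ! t) (take ?m (drop (t * ?m) L))))"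
  proof (rule prod.cong[OF refl])
    fix t assume "t \<in> {..<l}"
    hence t: "t < l" by simp
    show "rho_tilde d z \<phi> mx mv ((v ! t + v' ! t) mod mv) (take ?m (drop (t * ?m) K)) (take ?m (drop (t * ?m) L))
        = rho_tilde d z \<phi> mx mv (v ! t) (rotate (v' ! t) (take ?m (drop (t * ?m) K))) (rotate (v' ! t) (take ?m (drop (t * ?m) L)))"
      by (rule rt_shift[OF mv mx vlt[OF t] block_in[OF K t] block_in[OF L t]])
  qed
  also have "\<dots> = (\<Prod>t<l. rho_tilde d z \<phi> mx mv (v ! t) (take ?m (drop (t * ?m) (?\<sigma> K))) (take ?m (drop (t * ?m) (?\<sigma> L))))"
  proof (rule prod.cong[OF refl])
    fix t assume "t \<in> {..<l}"
    hence t: "t < length v'" using lv' by simp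
    show "rho_tilde d z \<phi> mx mv (v ! t) (rotate (v' ! t) (take ?m (drop (t * ?m) K))) (rotate (v' ! t) (take ?m (drop (t * ?m) L)))
        = rho_tilde d z \<phi> mx mv (v ! t) (take ?m (drop (t * ?m) (?\<sigma> K))) (take ?m (drop (t * ?m) (?\<sigma> L)))"
      using block_shp[OF m lK t] block_shp[OF m lL t] lv' by simp
  qed
  also have "\<dots> = op_tensor d ?m (map (rho_tilde d z \<phi> mx mv) v) (?\<sigma> K) (?\<sigma> L)"
    using sK sL lv by (simp add: op_tensor_def)
  finally show ?thesis .
qed

lemma partB:
  assumes mv: "0 < mv" and mx: "0 < mx"
    and v: "v \<in> lists_below mv l" and v': "v' \<in> lists_below mv l"
  shows "(let m = mx * mv; n = l * m;
               W = op_tensor d m (map (op_pow d m (cyclic_shift d m)) v')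
           in rho_out d E zero\<^sub>Q \<psi> mx mv (vadd mv v v')
              = op_mult d n (op_mult d n W (rho_out d E zero\<^sub>Q \<psi> mx mv v)) (adjoint W))"
proof -
  let ?m = "mx * mv"
  let ?n = "l * ?m"
  let ?L = "lists_below d ?n"
  let ?\<sigma> = "perm_list (shp ?m v') ?n"
  have m: "0 < ?m" using mv mx by simp
  have lv: "length v = l" and lv': "length v' = l" using v v' by (auto simp: lists_below_def)
  have bij: "bij_betw (shp ?m v') {..<?n} {..<?n}" using shp_bij[OF m, of v'] lv' by simp
  have W: "op_tensor d ?m (map (op_pow d ?m (cyclic_shift d ?m)) v')
      = (\<lambda>I J. if I \<in> ?L \<and> J = ?\<sigma> I then 1 else 0)"
    using W_char[OF m, of d v'] lv' by simp
  have sL: "\<And>I. I \<in> ?L \<Longrightarrow> ?\<sigma> I \<in> ?L" using perm_list_in[OF bij] by blast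
  show ?thesis unfolding Let_def W
  proof (intro ext)
    fix I J
    show "rho_out d E zero\<^sub>Q \<psi> mx mv (vadd mv v v') I J =
      op_mult d ?n (op_mult d ?n (\<lambda>I J. if I \<in> ?L \<and> J = ?\<sigma> I then 1 else 0) (rho_out d E zero\<^sub>Q \<psi> mx mv v))
       (adjoint (\<lambda>I J. if I \<in> ?L \<and> J = ?\<sigma> I then 1 else 0)) I J"
    proof (cases "I \<in> ?L \<and> J \<in> ?L")
      case False
      have "rho_out d E zero\<^sub>Q \<psi> mx mv (vadd mv v v') I J = 0"
        using lv lv' False by (auto simp: rho_out_def chan_pow_def vadd_len)
      thus ?thesis by (subst conj_perm[of d ?n ?\<sigma>, OF sL]) (use False in auto)
    next
      case True
      hence I: "I \<in> ?L" and J: "J \<in> ?L" by auto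
      have "rho_out d E zero\<^sub>Q \<psi> mx mv v (?\<sigma> I) (?\<sigma> J)
          = chan_pow d ?n E (op_tensor d ?m (map (rho_tilde d zero\<^sub>Q \<psi> mx mv) v)) (?\<sigma> I) (?\<sigma> J)"
        using lv by (simp add: rho_out_def)
      also have "\<dots> = chan_pow d ?n E (\<lambda>K L. op_tensor d ?m (map (rho_tilde d zero\<^sub>Q \<psi> mx mv) v) (?\<sigma> K) (?\<sigma> L)) I J"
        by (rule chan_pow_perm[OF bij I J])
      also have "\<dots> = chan_pow d ?n E (op_tensor d ?m (map (rho_tilde d zero\<^sub>Q \<psi> mx mv) (vadd mv v v'))) I J"
        unfolding chan_pow_def
        by (intro if_cong refl sum.cong arg_cong2[where f="(*)"] tensor_shift[OF mv mx v v', symmetric]) auto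
      also have "\<dots> = rho_out d E zero\<^sub>Q \<psi> mx mv (vadd mv v v') I J"
        using lv lv' by (simp add: rho_out_def vadd_len)
      finally have eq: "rho_out d E zero\<^sub>Q \<psi> mx mv v (?\<sigma> I) (?\<sigma> J) = rho_out d E zero\<^sub>Q \<psi> mx mv (vadd mv v v') I J" .
      show ?thesis
        apply (subst conj_perm[of d ?n ?\<sigma>])
        using sL apply blast
        apply (subst if_P[OF conjI[OF I J]])
        apply (rule eq[symmetric])
        done
    qed
  qed
qed

lemma vadd_rep0: "x \<in> lists_below mv l \<Longrightarrow> vadd mv (replicate l 0) x = x"
  by (intro nth_equalityI) (auto simp: vadd_def lists_below_def)

lemma vadd_vsub: "a \<in> lists_below mv k \<Longrightarrow> b \<in> lists_below mv k \<Longrightarrow> vadd mv (vsub mv a b) b = a"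
proof (intro nth_equalityI)
  assume a: "a \<in> lists_below mv k" and b: "b \<in> lists_below mv k"
  show "length (vadd mv (vsub mv a b) b) = length a" using a b by (simp add: vadd_def vsub_def lists_below_def)
  fix i assume "i < length (vadd mv (vsub mv a b) b)"
  hence i: "i < k" "i < length a" "i < length b" using a b by (auto simp: vadd_def vsub_def lists_below_def)
  have lt: "a ! i < mv" "b ! i < mv" using a b i by (auto simp: lists_below_def)
  have "vadd mv (vsub mv a b) b ! i = ((a ! i + mv - b ! i) mod mv + b ! i) mod mv"
    using i by (simp add: vadd_def vsub_def)
  also have "\<dots> = (a ! i + mv - b ! i + b ! i) mod mv" by (simp add: mod_add_left_eq)
  also have "\<dots> = (a ! i + mv) mod mv" using lt by simp
  also have "\<dots> = a ! i" using lt by simp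
  finally show "vadd mv (vsub mv a b) b ! i = a ! i" .
qed

lemma vadd_cancel:
  assumes "c \<in> lists_below mv k" "a \<in> lists_below mv k" "b \<in> lists_below mv k" "vadd mv c a = vadd mv c b"
  shows "a = b"
proof (intro nth_equalityI)
  show "length a = length b" using assms by (simp add: lists_below_def)
  fix i assume "i < length a"
  hence i: "i < k" "i < length a" "i < length b" "i < length c" using assms by (auto simp: lists_below_def)
  have "vadd mv c a ! i = vadd mv c b ! i" using assms by simp
  hence "(c ! i + a ! i) mod mv = (c ! i + b ! i) mod mv" using i by (simp add: vadd_def)
  moreover have "a ! i < mv" "b ! i < mv" using assms i by (auto simp: lists_below_def)
  ultimately show "a ! i = b ! i" using mod_add_cancel_nat' by blast
qed

lemma take_vadd: "take k (vadd mv a b) = vadd mv (take k a) (take k b)"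
  by (simp add: vadd_def take_map take_zip)

lemma partA:
  fixes R :: "nat list ring"
  assumes mv: "1 \<le> mv" and kl: "k \<le> l"
    and F: "field R" and C: "carrier R = lists_below mv l"
    and A: "\<forall>a\<in>carrier R. \<forall>b\<in>carrier R. a \<oplus>\<^bsub>R\<^esub> b = vadd mv a b"
    and u: "u \<in> lists_below mv l" "u \<noteq> replicate l 0"
    and z: "z \<in> lists_below mv k" and z': "z' \<in> lists_below mv k"
  shows "(let f = (\<lambda>v. take k (u \<otimes>\<^bsub>R\<^esub> v));
            \<phi> = (\<lambda>v. ((vsub mv z' z @ replicate (l - k) 0) \<otimes>\<^bsub>R\<^esub> inv\<^bsub>R\<^esub> u) \<oplus>\<^bsub>R\<^esub> v)
        in bij_betw \<phi> (lists_below mv l) (lists_below mv l) \<and>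
           \<phi> ` {v \<in> lists_below mv l. f v = z} = {v \<in> lists_below mv l. f v = z'})"
proof -
  interpret field R by (rule F)
  let ?w = "vsub mv z' z @ replicate (l - k) 0"
  let ?c = "?w \<otimes>\<^bsub>R\<^esub> inv\<^bsub>R\<^esub> u"
  let ?f = "\<lambda>v. take k (u \<otimes>\<^bsub>R\<^esub> v)"
  let ?\<phi> = "\<lambda>v. ?c \<oplus>\<^bsub>R\<^esub> v"
  have r0: "replicate l 0 \<in> carrier R" using C mv by (auto simp: lists_below_def)
  have "replicate l 0 \<oplus>\<^bsub>R\<^esub> \<zero>\<^bsub>R\<^esub> = replicate l 0" using r0 by simp
  moreover have "replicate l 0 \<oplus>\<^bsub>R\<^esub> \<zero>\<^bsub>R\<^esub> = vadd mv (replicate l 0) \<zero>\<^bsub>R\<^esub>" using A r0 by simp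
  moreover have "vadd mv (replicate l 0) \<zero>\<^bsub>R\<^esub> = \<zero>\<^bsub>R\<^esub>" using C zero_closed by (intro vadd_rep0) simp
  ultimately have zero: "\<zero>\<^bsub>R\<^esub> = replicate l 0" by simp
  have uC: "u \<in> carrier R" using u C by simp
  have uU: "u \<in> Units R" using uC u(2) zero by (simp add: field_Units)
  have vsubin: "vsub mv z' z \<in> lists_below mv k"
    using z z' mv by (auto simp: vsub_def lists_below_def set_zip)
  have wC: "?w \<in> carrier R" using vsubin kl mv C by (auto simp: lists_below_def)
  have cC: "?c \<in> carrier R" using wC uU by simp
  have uc: "u \<otimes>\<^bsub>R\<^esub> ?c = ?w"
  proof -
    have iC: "inv\<^bsub>R\<^esub> u \<in> carrier R" using uU by (rule Units_inv_closed)
    have "u \<otimes>\<^bsub>R\<^esub> ?c = ?w \<otimes>\<^bsub>R\<^esub> (u \<otimes>\<^bsub>R\<^esub> inv\<^bsub>R\<^esub> u)"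
      using m_lcomm[OF uC wC iC] .
    also have "\<dots> = ?w" using Units_r_inv[OF uU] wC by simp
    finally show ?thesis .
  qed
  have key: "?f (?\<phi> v) = vadd mv (vsub mv z' z) (?f v)" if v: "v \<in> carrier R" for v
  proof -
    have "u \<otimes>\<^bsub>R\<^esub> (?c \<oplus>\<^bsub>R\<^esub> v) = ?w \<oplus>\<^bsub>R\<^esub> u \<otimes>\<^bsub>R\<^esub> v" using uC cC v by (simp add: r_distr uc)
    also have "\<dots> = vadd mv ?w (u \<otimes>\<^bsub>R\<^esub> v)" using A wC uC v by simp
    finally have "?f (?\<phi> v) = vadd mv (take k ?w) (?f v)" by (simp add: take_vadd)
    moreover have "take k ?w = vsub mv z' z" using vsubin by (simp add: lists_below_def)
    ultimately show ?thesis by simp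
  qed
  have fin: "?f v \<in> lists_below mv k" if "v \<in> carrier R" for v
  proof -
    have "u \<otimes>\<^bsub>R\<^esub> v \<in> lists_below mv l" using that uC C by (metis m_closed)
    thus ?thesis using kl by (auto simp: lists_below_def dest: in_set_takeD)
  qed
  have bij: "bij_betw ?\<phi> (carrier R) (carrier R)"
  proof (rule bij_betw_byWitness[where f'="\<lambda>y. \<ominus>\<^bsub>R\<^esub> ?c \<oplus>\<^bsub>R\<^esub> y"])
    show "\<forall>a\<in>carrier R. \<ominus>\<^bsub>R\<^esub> ?c \<oplus>\<^bsub>R\<^esub> (?c \<oplus>\<^bsub>R\<^esub> a) = a" using cC by (simp add: a_assoc[symmetric] l_neg r_neg)
    show "\<forall>a\<in>carrier R. ?c \<oplus>\<^bsub>R\<^esub> (\<ominus>\<^bsub>R\<^esub> ?c \<oplus>\<^bsub>R\<^esub> a) = a" using cC by (simp add: a_assoc[symmetric] l_neg r_neg)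
    show "?\<phi> ` carrier R \<subseteq> carrier R" using cC by auto
    show "(\<lambda>y. \<ominus>\<^bsub>R\<^esub> ?c \<oplus>\<^bsub>R\<^esub> y) ` carrier R \<subseteq> carrier R" using cC by auto
  qed
  have img: "?\<phi> ` {v \<in> carrier R. ?f v = z} = {v \<in> carrier R. ?f v = z'}"
  proof
    show "?\<phi> ` {v \<in> carrier R. ?f v = z} \<subseteq> {v \<in> carrier R. ?f v = z'}"
      using key cC vadd_vsub[OF z' z] by auto
  next
    show "{v \<in> carrier R. ?f v = z'} \<subseteq> ?\<phi> ` {v \<in> carrier R. ?f v = z}"
    proof
      fix y assume y: "y \<in> {v \<in> carrier R. ?f v = z'}"
      let ?v = "\<ominus>\<^bsub>R\<^esub> ?c \<oplus>\<^bsub>R\<^esub> y"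
      have vC: "?v \<in> carrier R" using cC y by simp
      have py: "?\<phi> ?v = y" using cC y by (simp add: a_assoc[symmetric] l_neg r_neg)
      have "vadd mv (vsub mv z' z) (?f ?v) = vadd mv (vsub mv z' z) z"
        using key[OF vC] py y vadd_vsub[OF z' z] by simp
      hence "?f ?v = z" by (rule vadd_cancel[OF vsubin fin[OF vC] z])
      thus "y \<in> ?\<phi> ` {v \<in> carrier R. ?f v = z}" using vC py by (metis (mono_tags, lifting) image_eqI mem_Collect_eq)
    qed
  qed
  show ?thesis unfolding Let_def using bij img C by simp
qed

theorem mainTheorem8:
  fixes mx mv l k :: nat
    and R :: "nat list ring"
  assumes "1 \<le> mx" and "1 \<le> mv" and "1 \<le> l" and "1 \<le> k" and "k \<le> l"
    and "field R"
    and "carrier R = lists_below mv l"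
    and "\<forall>a\<in>carrier R. \<forall>b\<in>carrier R. a \<oplus>\<^bsub>R\<^esub> b = vadd mv a b"
  shows
    "(\<forall>u z z'. u \<in> lists_below mv l \<and> u \<noteq> replicate l 0 \<and>
         z \<in> lists_below mv k \<and> z' \<in> lists_below mv k \<longrightarrow>
       (let f = (\<lambda>v. take k (u \<otimes>\<^bsub>R\<^esub> v));
            \<phi> = (\<lambda>v. ((vsub mv z' z @ replicate (l - k) 0) \<otimes>\<^bsub>R\<^esub> inv\<^bsub>R\<^esub> u) \<oplus>\<^bsub>R\<^esub> v)
        in bij_betw \<phi> (lists_below mv l) (lists_below mv l) \<and>
           \<phi> ` {v \<in> lists_below mv l. f v = z} = {v \<in> lists_below mv l. f v = z'}))
   \<and>
    (\<forall>(d::nat) zero\<^sub>Q \<psi> E. 1 \<le> d \<and> unit_vec d zero\<^sub>Q \<and> unit_vec d \<psi> \<and> quantum_channel d E \<longrightarrow>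
       (\<forall>v\<in>lists_below mv l. \<forall>v'\<in>lists_below mv l.
          (let m = mx * mv; n = l * m;
               W = op_tensor d m (map (op_pow d m (cyclic_shift d m)) v')
           in rho_out d E zero\<^sub>Q \<psi> mx mv (vadd mv v v')
              = op_mult d n (op_mult d n W (rho_out d E zero\<^sub>Q \<psi> mx mv v)) (adjoint W))))"
proof (intro conjI allI impI ballI)
  fix u z z'
  assume h: "u \<in> lists_below mv l \<and> u \<noteq> replicate l 0 \<and> z \<in> lists_below mv k \<and> z' \<in> lists_below mv k"
  show "let f = (\<lambda>v. take k (u \<otimes>\<^bsub>R\<^esub> v));
            \<phi> = (\<lambda>v. ((vsub mv z' z @ replicate (l - k) 0) \<otimes>\<^bsub>R\<^esub> inv\<^bsub>R\<^esub> u) \<oplus>\<^bsub>R\<^esub> v)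
        in bij_betw \<phi> (lists_below mv l) (lists_below mv l) \<and>
           \<phi> ` {v \<in> lists_below mv l. f v = z} = {v \<in> lists_below mv l. f v = z'}"
    using h by (intro partA[OF assms(2) assms(5) assms(6) assms(7) assms(8)]) auto
next
  fix d :: nat and zero\<^sub>Q \<psi> E v v'
  assume "v \<in> lists_below mv l" "v' \<in> lists_below mv l"
  thus "let m = mx * mv; n = l * m;
               W = op_tensor d m (map (op_pow d m (cyclic_shift d m)) v')
           in rho_out d E zero\<^sub>Q \<psi> mx mv (vadd mv v v')
              = op_mult d n (op_mult d n W (rho_out d E zero\<^sub>Q \<psi> mx mv v)) (adjoint W)"
    using assms(1,2) by (intro partB) auto
qed

end
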